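(* For any prime $p$ and positive integer $n$, \[ \frac{\mathfrak{C}_2(\mathbb{Z}/p^n \mathbb{Z}) }{p^{6n}}= \left(1+\frac{1}{p}\right)\left(1-\frac{1}{p^2}\right)^{-1}\left(1-\frac{1}{p^3}\right)\left(1-\frac{1}{p^{2\lceil n/2\rceil}}\right) + O(n^2p^{-n/2}), \] with an absolute implied constant. In particular, the limit \[ \sigma_p = \lim_{n\to\infty} \frac{\mathfrak{C}_2(\mathbb{Z}/p^n \mathbb{Z}) }{p^{6n}} = \left(1+\frac{1}{p}\right)\left(1-\frac{1}{p^2}\right)^{-1}\left(1-\frac{1}{p^3}\right) \] exists.
   Context: For a prime $p$ and positive integer $n$, $\mathrm{Mat}_2(\mathbb{Z}/p^n\mathbb{Z})$ is the set of $2\times 2$ matrices with entries in $\mathbb{Z}/p^n\mathbb{Z}$, and $\mathfrak{C}_2(\mathbb{Z}/p^n \mathbb{Z})$ is the number of pairs $(A,B)\in \mathrm{Mat}_2(\mathbb{Z}/p^n\mathbb{Z})^2$ with $AB=BA$. *)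

theory Defs
  imports Complex_Main "HOL-Computational_Algebra.Primes"
begin

text \<open>A 2x2 matrix [[a,b],[c,d]] is represented by the tuple (a,b,c,d).
  Elements of Z/mZ are represented by integers in {0..<m}.\<close>
type_synonym mat2 = "int \<times> int \<times> int \<times> int"

definition mat2_mult :: "mat2 \<Rightarrow> mat2 \<Rightarrow> mat2" where
  "mat2_mult A B = (case A of (a,b,c,d) \<Rightarrow> case B of (e,f,g,h) \<Rightarrow>
      (a*e + b*g, a*f + b*h, c*e + d*g, c*f + d*h))"

definition mat2_mod :: "int \<Rightarrow> mat2 \<Rightarrow> mat2" where
  "mat2_mod m A = (case A of (a,b,c,d) \<Rightarrow> (a mod m, b mod m, c mod m, d mod m))"

definition Mat2_mod :: "int \<Rightarrow> mat2 set" where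
  "Mat2_mod m = {0..<m} \<times> {0..<m} \<times> {0..<m} \<times> {0..<m}"

definition commuting_count :: "nat \<Rightarrow> nat \<Rightarrow> nat" where
  "commuting_count p n = (let m = int (p ^ n) in
     card {(A, B). A \<in> Mat2_mod m \<and> B \<in> Mat2_mod m \<and>
                   mat2_mod m (mat2_mult A B) = mat2_mod m (mat2_mult B A)})"

definition sigma_main :: "nat \<Rightarrow> real" where
  "sigma_main p = (1 + 1 / real p) * inverse (1 - 1 / real p ^ 2) * (1 - 1 / real p ^ 3)"

end

theory Submission imports Defs begin

type_synonym v3 = "int \<times> int \<times> int"

definition cz :: "int \<Rightarrow> v3 \<Rightarrow> v3 \<Rightarrow> bool" where
  "cz m u v = (case u of (u1,u2,u3) \<Rightarrow> case v of (v1,v2,v3) \<Rightarrow>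
     m dvd (u2*v3 - u3*v2) \<and> m dvd (u3*v1 - u1*v3) \<and> m dvd (u1*v2 - u2*v1))"

definition R3 :: "int \<Rightarrow> v3 set" where
  "R3 m = {0..<m} \<times> {0..<m} \<times> {0..<m}"

definition Nset :: "int \<Rightarrow> v3 \<Rightarrow> v3 set" where
  "Nset m u = {v \<in> R3 m. cz m u v}"

lemma finite_R3[simp]: "finite (R3 m)" by (simp add: R3_def)

lemma finite_Nset[simp]: "finite (Nset m u)" by (simp add: Nset_def)

lemma Nset_rot: "card (Nset m (a,b,c)) = card (Nset m (b,c,a))"
proof -
  have "Nset m (b,c,a) = (\<lambda>(x,y,z). (y,z,x)) ` Nset m (a,b,c)"
    by (auto simp: Nset_def R3_def cz_def image_iff)
  moreover have "inj_on (\<lambda>(x,y,z). (y,z,x)) (Nset m (a,b,c))"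
    by (auto simp: inj_on_def)
  ultimately show ?thesis by (simp add: card_image)
qed

lemma Nset_prim2:
  assumes m: "m > 0" and cop: "coprime b m"
  shows "card (Nset m (a,b,c)) = nat m"
proof -
  obtain s t where st: "s*b + t*m = 1" using bezout_int[of b m] cop
    by (auto simp: coprime_iff_gcd_eq_1)
  have inv: "m dvd (s*b - 1)" using st by (metis add_diff_cancel_left' dvd_minus_iff dvd_triv_right minus_diff_eq)
  define F where "F = (\<lambda>f. ((s*a*f) mod m, f, (s*c*f) mod m))"
  have "Nset m (a,b,c) = F ` {0..<m}"
  proof
    show "Nset m (a,b,c) \<subseteq> F ` {0..<m}"
    proof
      fix v assume v: "v \<in> Nset m (a,b,c)"
      obtain x f g where vv: "v = (x,f,g)" by (cases v) auto
      have h: "x \<in> {0..<m}" "f \<in> {0..<m}" "g \<in> {0..<m}" "m dvd (b*g - c*f)" "m dvd (a*f - b*x)"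
        using v by (auto simp: vv Nset_def R3_def cz_def)
      have "m dvd (s*b - 1)*g - s*(b*g - c*f)" using h inv by simp
      hence "m dvd (s*c*f - g)" by (simp add: algebra_simps)
      hence g: "g = (s*c*f) mod m" using h
        by (metis mod_eq_dvd_iff mod_pos_pos_trivial atLeastLessThan_iff)
      have "m dvd (s*b - 1)*x + s*(a*f - b*x)" using h inv by simp
      hence "m dvd (s*a*f - x)" by (simp add: algebra_simps)
      hence x: "x = (s*a*f) mod m" using h
        by (metis mod_eq_dvd_iff mod_pos_pos_trivial atLeastLessThan_iff)
      show "v \<in> F ` {0..<m}" using h x g by (auto simp: vv F_def)
    qed
  next
    show "F ` {0..<m} \<subseteq> Nset m (a,b,c)"
    proof
      fix v assume "v \<in> F ` {0..<m}"
      then obtain f where f: "f \<in> {0..<m}" and vv: "v = F f" by auto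
      define x where "x = (s*a*f) mod m"
      define g where "g = (s*c*f) mod m"
      have x1: "m dvd x - s*a*f" unfolding x_def by (simp add: mod_eq_dvd_iff[symmetric])
      have g1: "m dvd g - s*c*f" unfolding g_def by (simp add: mod_eq_dvd_iff[symmetric])
      have e1: "b*g - c*f = b*(g - s*c*f) + c*f*(s*b - 1)" by (simp add: algebra_simps)
      have e2: "c*x - a*g = c*(x - s*a*f) - a*(g - s*c*f)" by (simp add: algebra_simps)
      have e3: "a*f - b*x = - b*(x - s*a*f) - a*f*(s*b - 1)" by (simp add: algebra_simps)
      have "m dvd b*g - c*f" unfolding e1 using g1 inv by simp
      moreover have "m dvd c*x - a*g" unfolding e2 using g1 x1 by simp
      moreover have "m dvd a*f - b*x" unfolding e3 using x1 inv by simp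
      moreover have "x \<in> {0..<m}" "g \<in> {0..<m}" using m by (auto simp: x_def g_def)
      ultimately show "v \<in> Nset m (a,b,c)" using f
        by (simp add: vv F_def Nset_def R3_def cz_def x_def[symmetric] g_def[symmetric])
    qed
  qed
  moreover have "inj_on F {0..<m}" by (auto simp: inj_on_def F_def)
  ultimately show ?thesis by (simp add: card_image)
qed

definition CZ :: "int \<Rightarrow> (v3 \<times> v3) set" where
  "CZ m = {(u,v). u \<in> R3 m \<and> v \<in> R3 m \<and> cz m u v}"

lemma finite_CZ[simp]: "finite (CZ m)"
  by (rule finite_subset[of _ "R3 m \<times> R3 m"]) (auto simp: CZ_def)

lemma modeq_dvd: "((x::int) mod m = y mod m) = (m dvd x - y)"
  by (simp add: mod_eq_dvd_iff)

lemma dvd_mods: "(m dvd (c*(y mod m) - (z mod m)*g)) = (m dvd (c*y - z*(g::int)))"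
proof -
  have a: "(c*(y mod m)) mod m = (c*y) mod m" by (simp add: mod_mult_right_eq)
  have b: "((z mod m)*g) mod m = (z*g) mod m" by (simp add: mod_mult_left_eq)
  have "(c*(y mod m) - (z mod m)*g) mod m = (c*y - z*g) mod m"
    using mod_diff_cong[OF a b] .
  thus ?thesis by (simp add: dvd_eq_mod_eq_0)
qed

lemma comm_iff:
  "(mat2_mod m (mat2_mult (a,b,c,d) (e,f,g,h)) = mat2_mod m (mat2_mult (e,f,g,h) (a,b,c,d)))
   = cz m ((a-d) mod m, b, c) ((e-h) mod m, f, g)"
proof -
  have L: "(mat2_mod m (mat2_mult (a,b,c,d) (e,f,g,h)) = mat2_mod m (mat2_mult (e,f,g,h) (a,b,c,d)))
     = (m dvd (a*e+b*g - (e*a+f*c)) \<and> m dvd (a*f+b*h - (e*b+f*d)) \<and> m dvd (c*e+d*g - (g*a+h*c))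
        \<and> m dvd (c*f+d*h - (g*b+h*d)))"
    by (simp add: mat2_mod_def mat2_mult_def modeq_dvd)
  have e1: "a*e+b*g - (e*a+f*c) = b*g - c*f" by (simp add: algebra_simps)
  have e4: "c*f+d*h - (g*b+h*d) = - (b*g - c*f)" by (simp add: algebra_simps)
  have e2: "a*f+b*h - (e*b+f*d) = - (b*(e-h) - (a-d)*f)" by (simp add: algebra_simps)
  have e3: "c*e+d*g - (g*a+h*c) = c*(e-h) - (a-d)*g" by (simp add: algebra_simps)
  have r2: "(m dvd ((a-d) mod m * f - b * ((e-h) mod m))) = (m dvd (b*(e-h) - (a-d)*f))"
    using dvd_mods[of m b "e-h" "a-d" f]
    by (metis dvd_minus_iff minus_diff_eq)
  show ?thesis unfolding L e1 e2 e3 e4 dvd_minus_iff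
    by (simp add: cz_def dvd_mods r2) blast
qed

lemma count_eq:
  assumes m: "m > 0"
  shows "card {(A, B). A \<in> Mat2_mod m \<and> B \<in> Mat2_mod m \<and>
                   mat2_mod m (mat2_mult A B) = mat2_mod m (mat2_mult B A)} = card (CZ m) * (nat m)^2"
proof -
  let ?C = "{(A, B). A \<in> Mat2_mod m \<and> B \<in> Mat2_mod m \<and>
                   mat2_mod m (mat2_mult A B) = mat2_mod m (mat2_mult B A)}"
  define F :: "mat2 \<times> mat2 \<Rightarrow> (v3 \<times> v3) \<times> (int \<times> int)" where
    "F = (\<lambda>((a,b,c,d),(e,f,g,h)). ((((a-d) mod m, b, c), ((e-h) mod m, f, g)), (d, h)))"
  define G :: "(v3 \<times> v3) \<times> (int \<times> int) \<Rightarrow> mat2 \<times> mat2" where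
    "G = (\<lambda>(((x,b,c),(y,f,g)),(d,h)). (((x+d) mod m, b, c, d), ((y+h) mod m, f, g, h)))"
  have "bij_betw F ?C (CZ m \<times> ({0..<m} \<times> {0..<m}))"
  proof (rule bij_betw_byWitness[where f'=G])
    show "\<forall>a\<in>?C. G (F a) = a"
      by (auto simp: F_def G_def Mat2_mod_def mod_simps)
    show "\<forall>a\<in>CZ m \<times> ({0..<m} \<times> {0..<m}). F (G a) = a"
      by (auto simp: F_def G_def CZ_def R3_def mod_simps)
    show "F ` ?C \<subseteq> CZ m \<times> ({0..<m} \<times> {0..<m})"
      using m by (auto simp: F_def CZ_def R3_def Mat2_mod_def comm_iff)
    show "G ` (CZ m \<times> ({0..<m} \<times> {0..<m})) \<subseteq> ?C"
      using m by (auto simp: G_def CZ_def R3_def Mat2_mod_def comm_iff mod_simps)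
  qed
  hence "card ?C = card (CZ m \<times> ({0..<m} \<times> {0..<m}))" by (rule bij_betw_same_card)
  also have "\<dots> = card (CZ m) * (nat m)^2" by (simp add: card_cartesian_product power2_eq_square)
  finally show ?thesis .
qed


lemma dvd_mods2: "(m dvd (b*(z mod m) - c*(y mod m))) = (m dvd (b*z - c*(y::int)))"
proof -
  have a: "(b*(z mod m)) mod m = (b*z) mod m" by (simp add: mod_mult_right_eq)
  have b: "(c*(y mod m)) mod m = (c*y) mod m" by (simp add: mod_mult_right_eq)
  have "(b*(z mod m) - c*(y mod m)) mod m = (b*z - c*y) mod m"
    using mod_diff_cong[OF a b] .
  thus ?thesis by (simp add: dvd_eq_mod_eq_0)
qed

lemma cz_mod: "cz m u (x mod m, y mod m, z mod m) = cz m u (x,y,z)"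
  by (cases u) (simp add: cz_def dvd_mods2)

lemma cz_scale: "(p::int) \<noteq> 0 \<Longrightarrow> cz (p*m') (p*a,p*b,p*c) v = cz m' (a,b,c) v"
proof (cases v)
  case (fields x y z)
  assume p: "p \<noteq> 0"
  have "\<And>X Y. p*X - p*Y = p*(X - Y)" by (simp add: algebra_simps)
  thus ?thesis using p by (simp add: fields cz_def mult.assoc dvd_times_left_cancel_iff)
qed

lemma zdiv_lt: assumes "0 < (q::int)" "x < n*q" shows "x div q < n"
proof (rule ccontr)
  assume "\<not> x div q < n"
  hence "n*q \<le> (x div q)*q" using assms by (intro mult_right_mono) auto
  also have "\<dots> \<le> x"
  proof -
    have "x div q * q + x mod q = x" by (rule div_mult_mod_eq)
    moreover have "0 \<le> x mod q" using assms(1) by simp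
    ultimately show ?thesis by linarith
  qed
  finally show False using assms by simp
qed

lemma L1: "0 \<le> (x::int) \<Longrightarrow> x < p*m' \<Longrightarrow> m' > 0 \<Longrightarrow> 0 \<le> x div m' \<and> x div m' < p"
  using zdiv_lt[of m' x p] by (simp add: pos_imp_zdiv_nonneg_iff)

lemma L2: "0 \<le> (x::int) \<Longrightarrow> x < m' \<Longrightarrow> 0 \<le> i \<Longrightarrow> i < p \<Longrightarrow> 0 \<le> x + m'*i \<and> x + m'*i < p*m'"
proof -
  assume a: "0 \<le> x" "x < m'" "0 \<le> i" "i < p"
  have "m'*i \<le> m'*(p-1)" using a by (intro mult_left_mono) auto
  thus ?thesis using a by (simp add: algebra_simps)
qed

lemma L3: "0 \<le> (x::int) \<Longrightarrow> x < m' \<Longrightarrow> (x+m'*i) mod m' = x \<and> (x+m'*i) div m' = i"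
  by simp

lemma L4: "0 \<le> (a::int) \<Longrightarrow> a < p*m' \<Longrightarrow> p dvd a \<Longrightarrow> p > 0 \<Longrightarrow> 0 \<le> a div p \<and> a div p < m'"
  using zdiv_lt[of p a m'] by (simp add: pos_imp_zdiv_nonneg_iff mult.commute)

definition Pd :: "int \<Rightarrow> v3 \<Rightarrow> bool" where
  "Pd p u = (case u of (a,b,c) \<Rightarrow> p dvd a \<and> p dvd b \<and> p dvd c)"

lemma reduce:
  assumes p: "p > 0" and m': "m' > 0"
  shows "card {x \<in> CZ (p*m'). Pd p (fst x)} = card (CZ m') * (nat p)^3"
proof -
  let ?A = "{x \<in> CZ (p*m'). Pd p (fst x)}"
  define F :: "v3 \<times> v3 \<Rightarrow> (v3 \<times> v3) \<times> v3" where
    "F = (\<lambda>((a,b,c),(x,y,z)). (((a div p, b div p, c div p),(x mod m', y mod m', z mod m')),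
           (x div m', y div m', z div m')))"
  define G :: "(v3 \<times> v3) \<times> v3 \<Rightarrow> v3 \<times> v3" where
    "G = (\<lambda>(((a,b,c),(x,y,z)),(i,j,k)). ((p*a,p*b,p*c),(x+m'*i, y+m'*j, z+m'*k)))"
  have "bij_betw F ?A (CZ m' \<times> R3 p)"
  proof (rule bij_betw_byWitness[where f'=G])
    show "\<forall>a\<in>?A. G (F a) = a"
    proof
      fix t assume h: "t \<in> ?A"
      obtain a b c x y z where tt: "t = ((a,b,c),(x,y,z))" by (metis prod.collapse)
      have hh: "p*(a div p) = a" "p*(b div p) = b" "p*(c div p) = c" using h by (auto simp: tt Pd_def)
      have "x mod m' + m'*(x div m') = x" "y mod m' + m'*(y div m') = y" "z mod m' + m'*(z div m') = z"
        by simp_all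
      thus "G (F t) = t" using hh by (simp add: tt F_def G_def)
    qed
    show "\<forall>a\<in>CZ m' \<times> R3 p. F (G a) = a"
    proof
      fix t assume h: "t \<in> CZ m' \<times> R3 p"
      obtain a b c x y z i j k where tt: "t = (((a,b,c),(x,y,z)),(i,j,k))" by (metis prod.collapse)
      have r: "0 \<le> x" "x < m'" "0 \<le> y" "y < m'" "0 \<le> z" "z < m'" using h by (auto simp: tt CZ_def R3_def)
      show "F (G t) = t" using p L3[OF r(1,2), of i] L3[OF r(3,4), of j] L3[OF r(5,6), of k]
        by (simp add: tt F_def G_def)
    qed
    show "F ` ?A \<subseteq> CZ m' \<times> R3 p"
    proof
      fix w assume "w \<in> F ` ?A"
      then obtain t where t: "w = F t" "t \<in> ?A" by blast
      obtain a b c x y z where tt: "t = ((a,b,c),(x,y,z))" by (metis prod.collapse)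
      have w: "w = F ((a,b,c),(x,y,z))" and
        h: "((a,b,c),(x,y,z)) \<in> ?A" using t tt by auto
      have hh: "p*(a div p) = a" "p*(b div p) = b" "p*(c div p) = c" using h by (auto simp: Pd_def)
      have "cz (p*m') (a,b,c) (x,y,z)" using h by (simp add: CZ_def)
      hence "cz (p*m') (p*(a div p), p*(b div p), p*(c div p)) (x,y,z)"
        by (simp only: hh)
      hence "cz m' (a div p, b div p, c div p) (x mod m', y mod m', z mod m')"
        using p by (simp add: cz_scale cz_mod)
      moreover have "0 \<le> a div p \<and> a div p < m'" "0 \<le> b div p \<and> b div p < m'" "0 \<le> c div p \<and> c div p < m'"
        using h p L4[of a p m'] L4[of b p m'] L4[of c p m'] by (auto simp: CZ_def R3_def Pd_def)
      moreover have "0 \<le> x div m' \<and> x div m' < p" "0 \<le> y div m' \<and> y div m' < p" "0 \<le> z div m' \<and> z div m' < p"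
        using h m' L1[of x p m'] L1[of y p m'] L1[of z p m'] by (auto simp: CZ_def R3_def)
      ultimately show "w \<in> CZ m' \<times> R3 p" using m'
        by (simp add: w F_def CZ_def R3_def)
    qed
    show "G ` (CZ m' \<times> R3 p) \<subseteq> ?A"
    proof
      fix w assume "w \<in> G ` (CZ m' \<times> R3 p)"
      then obtain t where t: "w = G t" "t \<in> CZ m' \<times> R3 p" by blast
      obtain a b c x y z i j k where tt: "t = (((a,b,c),(x,y,z)),(i,j,k))" by (metis prod.collapse)
      have w: "w = G (((a,b,c),(x,y,z)),(i,j,k))" and
        h: "(((a,b,c),(x,y,z)),(i,j,k)) \<in> CZ m' \<times> R3 p" using t tt by auto
      have "cz m' (a,b,c) ((x+m'*i) mod m', (y+m'*j) mod m', (z+m'*k) mod m')"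
        using h by (auto simp: CZ_def R3_def L3)
      hence "cz m' (a,b,c) (x+m'*i, y+m'*j, z+m'*k)" by (simp only: cz_mod)
      hence "cz (p*m') (p*a,p*b,p*c) (x+m'*i, y+m'*j, z+m'*k)"
        using p cz_scale[of p m' a b c] by (metis less_irrefl)
      moreover have r: "0 \<le> a" "a < m'" "0 \<le> b" "b < m'" "0 \<le> c" "c < m'"
        "0 \<le> x" "x < m'" "0 \<le> y" "y < m'" "0 \<le> z" "z < m'"
        "0 \<le> i" "i < p" "0 \<le> j" "j < p" "0 \<le> k" "k < p"
        using h by (auto simp: CZ_def R3_def)
      moreover have "p*a < p*m'" "p*b < p*m'" "p*c < p*m'" using r p by simp_all
      moreover have "0 \<le> p*a" "0 \<le> p*b" "0 \<le> p*c" using r p by simp_all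
      ultimately show "w \<in> ?A" using L2[of x m' i p] L2[of y m' j p] L2[of z m' k p]
        by (simp add: w G_def CZ_def R3_def Pd_def)
    qed
  qed
  hence "card ?A = card (CZ m' \<times> R3 p)" by (rule bij_betw_same_card)
  also have "\<dots> = card (CZ m') * (nat p)^3"
    by (simp add: card_cartesian_product R3_def power3_eq_cube)
  finally show ?thesis .
qed


lemma split_card: "finite S \<Longrightarrow> card S = card {x\<in>S. Q x} + card {x\<in>S. \<not> Q x}"
proof -
  assume f: "finite S"
  have "S = {x\<in>S. Q x} \<union> {x\<in>S. \<not> Q x}" by auto
  hence "card S = card ({x\<in>S. Q x} \<union> {x\<in>S. \<not> Q x})" by simp
  also have "\<dots> = card {x\<in>S. Q x} + card {x\<in>S. \<not> Q x}"
    by (rule card_Un_disjoint) (use f in auto)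
  finally show ?thesis .
qed

lemma prim_card:
  assumes P: "prime (P::int)" and u: "\<not> Pd P u" and m: "m = P^n"
  shows "card (Nset m u) = nat m"
proof -
  obtain a b c where uu: "u = (a,b,c)" by (metis prod.collapse)
  have mpos: "m > 0" using P m by (simp add: prime_gt_0_int)
  have cop: "coprime x m" if "\<not> P dvd x" for x
  proof -
    have "coprime P x" using P that by (rule prime_imp_coprime)
    hence "coprime x P" by (simp add: coprime_commute)
    thus ?thesis by (simp add: m)
  qed
  consider "\<not> P dvd b" | "\<not> P dvd c" | "\<not> P dvd a" using u by (auto simp: uu Pd_def)
  thus ?thesis
  proof cases
    case 1 thus ?thesis using Nset_prim2[OF mpos cop[OF 1]] by (simp add: uu)
  next
    case 2 thus ?thesis using Nset_prim2[OF mpos cop[OF 2], of b a] Nset_rot[of m a b c] by (simp add: uu)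
  next
    case 3 thus ?thesis using Nset_prim2[OF mpos cop[OF 3], of c b] Nset_rot[of m a b c] Nset_rot[of m b c a]
      by (simp add: uu)
  qed
qed

lemma div_set_card:
  assumes "(P::int) > 0" "m' \<ge> 0"
  shows "card {x\<in>{0..<P*m'}. P dvd x} = nat m'"
proof -
  have "{x\<in>{0..<P*m'}. P dvd x} = (\<lambda>y. P*y) ` {0..<m'}"
  proof
    show "{x\<in>{0..<P*m'}. P dvd x} \<subseteq> (\<lambda>y. P*y) ` {0..<m'}"
    proof
      fix x assume x: "x \<in> {x\<in>{0..<P*m'}. P dvd x}"
      then obtain y where y: "x = P*y" by auto
      have "0 \<le> y" using x y assms by (simp add: zero_le_mult_iff)
      moreover have "y < m'" using x y assms by simp
      ultimately show "x \<in> (\<lambda>y. P*y) ` {0..<m'}" using y by auto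
    qed
  next
    show "(\<lambda>y. P*y) ` {0..<m'} \<subseteq> {x\<in>{0..<P*m'}. P dvd x}" using assms by auto
  qed
  moreover have "inj_on (\<lambda>y. P*y) {0..<m'}" using assms by (auto simp: inj_on_def)
  ultimately show ?thesis by (simp add: card_image)
qed

lemma Pd_card:
  assumes "(P::int) > 0" "m' \<ge> 0"
  shows "card {u\<in>R3 (P*m'). Pd P u} = (nat m')^3"
proof -
  let ?D = "{x\<in>{0..<P*m'}. P dvd x}"
  have "{u\<in>R3 (P*m'). Pd P u} = ?D \<times> ?D \<times> ?D" by (auto simp: R3_def Pd_def)
  thus ?thesis using div_set_card[OF assms] by (simp add: card_cartesian_product power3_eq_cube)
qed

lemma recur:
  assumes p: "prime (p::nat)"
  shows "card (CZ (int (p^(Suc n)))) = p^(Suc n) * ((p^(Suc n))^3 - (p^n)^3) + card (CZ (int (p^n))) * p^3"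
proof -
  let ?P = "int p"
  let ?m = "int (p^(Suc n))"
  let ?m' = "int (p^n)"
  have P: "prime ?P" using p by simp
  have Ppos: "?P > 0" using p prime_gt_0_nat by simp
  have mm: "?m = ?P * ?m'" by simp
  have "card (CZ ?m) = card {x\<in>CZ ?m. Pd ?P (fst x)} + card {x\<in>CZ ?m. \<not> Pd ?P (fst x)}"
    by (rule split_card) simp
  also have "card {x\<in>CZ ?m. Pd ?P (fst x)} = card (CZ ?m') * p^3"
    using reduce[OF Ppos, of ?m'] Ppos unfolding mm by simp
  also have "{x\<in>CZ ?m. \<not> Pd ?P (fst x)} = (SIGMA u:{u\<in>R3 ?m. \<not> Pd ?P u}. Nset ?m u)"
    by (auto simp: CZ_def Nset_def)
  also have "card \<dots> = (\<Sum>u\<in>{u\<in>R3 ?m. \<not> Pd ?P u}. card (Nset ?m u))"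
    by (rule card_SigmaI) auto
  also have "\<dots> = (\<Sum>u\<in>{u\<in>R3 ?m. \<not> Pd ?P u}. p^(Suc n))"
  proof (rule sum.cong)
    fix u assume u: "u \<in> {u\<in>R3 ?m. \<not> Pd ?P u}"
    have "card (Nset ?m u) = nat ?m" using u by (intro prim_card[OF P, of u ?m "Suc n"]) (auto simp: of_nat_power)
    also have "nat ?m = p^Suc n" by (rule nat_int)
    finally show "card (Nset ?m u) = p^Suc n" .
  qed simp
  also have "\<dots> = card {u\<in>R3 ?m. \<not> Pd ?P u} * p^(Suc n)" by simp
  also have "card {u\<in>R3 ?m. \<not> Pd ?P u} = (p^(Suc n))^3 - (p^n)^3"
  proof -
    have "card (R3 ?m) = card {u\<in>R3 ?m. Pd ?P u} + card {u\<in>R3 ?m. \<not> Pd ?P u}"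
      by (rule split_card) simp
    moreover have "card (R3 ?m) = (p^(Suc n))^3"
      by (simp only: R3_def card_cartesian_product card_atLeastLessThan_int diff_zero nat_int power3_eq_cube)
    moreover have "card {u\<in>R3 ?m. Pd ?P u} = (p^n)^3"
      using Pd_card[OF Ppos, of ?m'] unfolding mm by (simp add: nat_power_eq)
    ultimately show ?thesis by simp
  qed
  finally show ?thesis by simp
qed

lemma CZ1: "card (CZ 1) = 1"
proof -
  have "CZ 1 = {((0,0,0),(0,0,0))}" by (auto simp: CZ_def R3_def cz_def)
  thus ?thesis by simp
qed


lemma closed_form:
  assumes p: "prime (p::nat)"
  shows "real p^2 * real (card (CZ (int (p^n)))) = real p^(4*n) * (real p^2 + real p + 1) - real p^(3*n) * (real p + 1)"
proof (induction n)
  case 0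
  show ?case using CZ1 by simp
next
  case (Suc n)
  have "p^n \<le> p^(Suc n)" using prime_ge_1_nat[OF p] by (intro power_increasing) auto
  hence le: "(p^n)^3 \<le> (p^(Suc n))^3" by (intro power_mono) auto
  have "real (card (CZ (int (p^(Suc n))))) =
        real p^(Suc n) * (real p^(3*Suc n) - real p^(3*n)) + real (card (CZ (int (p^n)))) * real p^3"
  proof -
    have e1: "(p^(Suc n))^3 = p^(3*Suc n)" by (metis power_mult mult.commute)
    have e2: "(p^n)^3 = p^(3*n)" by (metis power_mult mult.commute)
    have r: "card (CZ (int (p^(Suc n)))) = p^(Suc n) * (p^(3*Suc n) - p^(3*n)) + card (CZ (int (p^n))) * p^3"
      using recur[OF p, of n] by (simp only: e1 e2)
    have le': "p^(3*n) \<le> p^(3*Suc n)" using le by (simp only: e1 e2)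
    show ?thesis unfolding r using le' by (simp add: of_nat_diff)
  qed
  hence "real p^2 * real (card (CZ (int (p^(Suc n))))) =
        real p^2 * (real p^(Suc n) * (real p^(3*Suc n) - real p^(3*n)) + real (card (CZ (int (p^n)))) * real p^3)"
    by (rule arg_cong)
  also have "\<dots> = real p^2 * (real p^(Suc n) * (real p^(3*Suc n) - real p^(3*n))) + real p^3 * (real p^2 * real (card (CZ (int (p^n)))))"
    by (simp only: algebra_simps)
  also have "\<dots> = real p^2 * (real p^(Suc n) * (real p^(3*Suc n) - real p^(3*n))) + real p^3 * (real p^(4*n) * (real p^2 + real p + 1) - real p^(3*n) * (real p + 1))"
    using Suc.IH by simp
  also have "\<dots> = real p^(4*Suc n) * (real p^2 + real p + 1) - real p^(3*Suc n) * (real p + 1)"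
  proof -
    define x where "x = real p"
    define y where "y = real p^n"
    have h: "real p^(3*n) = y^3" "real p^(4*n) = y^4" "real p^(Suc n) = x*y"
      "real p^(3*Suc n) = x^3*y^3" "real p^(4*Suc n) = x^4*y^4"
      by (simp_all add: x_def y_def power_mult[symmetric] mult.commute power_mult_distrib power_add)
    show ?thesis unfolding h unfolding x_def[symmetric] by algebra
  qed
  finally show ?case .
qed

lemma ratio_eq:
  assumes p: "prime (p::nat)"
  shows "real (commuting_count p n) / real p ^ (6 * n)
     = (real p^2 + real p + 1) / real p^2 - (real p + 1) / real p^2 / real p^n"
proof -
  let ?x = "real p"
  have x: "?x > 0" using p prime_gt_0_nat by simp
  have cc: "commuting_count p n = card (CZ (int (p^n))) * (p^n)^2"
    unfolding commuting_count_def Let_def using count_eq[of "int (p^n)"] p prime_gt_0_nat by (simp add: nat_power_eq)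
  let ?c = "real (card (CZ (int (p^n))))"
  have "real (commuting_count p n) / ?x ^ (6 * n) = ?c * ?x^(2*n) / ?x^(6*n)"
    by (simp add: cc power_mult[symmetric] mult.commute)
  also have "\<dots> = ?c / ?x^(4*n)"
  proof -
    have "?x^(6*n) = ?x^(2*n) * ?x^(4*n)" by (simp add: power_add[symmetric])
    thus ?thesis using x by simp
  qed
  also have "\<dots> = (?x^2 * ?c) / (?x^2 * ?x^(4*n))" using x by simp
  also have "\<dots> = (?x^(4*n) * (?x^2 + ?x + 1) - ?x^(3*n) * (?x + 1)) / (?x^2 * ?x^(4*n))"
    using closed_form[OF p, of n] by simp
  also have "\<dots> = (?x^2 + ?x + 1) / ?x^2 - (?x + 1) / ?x^2 / ?x^n"
  proof -
    have "?x^(4*n) = ?x^(3*n) * ?x^n" by (simp add: power_add[symmetric])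
    thus ?thesis using x by (simp add: field_simps)
  qed
  finally show ?thesis .
qed

lemma sigma_eq:
  assumes "(x::real) \<ge> 2"
  shows "(1 + 1 / x) * inverse (1 - 1 / x ^ 2) * (1 - 1 / x ^ 3) = (x^2 + x + 1) / x^2"
proof -
  have x0: "x \<noteq> 0" "x - 1 \<noteq> 0" "x + 1 \<noteq> 0" using assms by auto
  have "1 - 1 / x^2 = (x - 1)*(x + 1) / x^2" using x0 by (simp add: field_simps power2_eq_square)
  moreover have "1 - 1 / x^3 = (x - 1)*(x^2 + x + 1) / x^3" using x0 by (simp add: field_simps power3_eq_cube power2_eq_square)
  moreover have "1 + 1/x = (x+1)/x" using x0 by (simp add: field_simps)
  ultimately have "(1 + 1 / x) * inverse (1 - 1 / x ^ 2) * (1 - 1 / x ^ 3)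
     = ((x+1)/x) * (x^2 / ((x - 1)*(x + 1))) * ((x - 1)*(x^2 + x + 1) / x^3)"
    by (simp add: inverse_divide)
  also have "\<dots> = ((x+1) * (x - 1)) * (x^2 * (x^2 + x + 1)) / (((x+1) * (x - 1)) * (x * x^3))"
    by (simp add: field_simps)
  also have "\<dots> = (x^2 * (x^2 + x + 1)) / (x * x^3)" using x0 by simp
  also have "\<dots> = (x^2 + x + 1) / x^2" using x0 by (simp add: field_simps power2_eq_square power3_eq_cube)
  finally show ?thesis .
qed


lemma bound_main:
  assumes p: "prime (p::nat)" and n: "n \<ge> 1"
  shows "\<bar>real (commuting_count p n) / real p ^ (6 * n)
              - sigma_main p * (1 - 1 / real p ^ (2 * nat \<lceil>real n / 2\<rceil>))\<bar>
            \<le> 3 * real n ^ 2 * real p powr (- real n / 2)"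
proof -
  let ?x = "real p"
  let ?k = "2 * nat \<lceil>real n / 2\<rceil>"
  have x2: "?x \<ge> 2" using prime_ge_2_nat[OF p] by simp
  have sig: "sigma_main p = (?x^2 + ?x + 1) / ?x^2"
    unfolding sigma_main_def using sigma_eq[OF x2] by simp
  define s where "s = (?x^2 + ?x + 1) / ?x^2"
  define t where "t = (?x + 1) / ?x^2"
  have s0: "0 \<le> s" "0 \<le> t" unfolding s_def t_def by auto
  have st: "s + t \<le> 3"
  proof -
    have "s + t = 1 + (2 * ?x + 2) / ?x^2" using x2 unfolding s_def t_def by (simp add: field_simps)
    moreover have "(2 * ?x + 2) / ?x^2 \<le> 2"
    proof -
      have q: "?x*?x \<ge> 2*?x" using x2 by (intro mult_right_mono) auto
      hence "2*?x+2 \<le> 2*?x^2" using x2 unfolding power2_eq_square by linarith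
      moreover have "?x^2 > 0" using x2 by simp
      ultimately show ?thesis by (simp add: pos_divide_le_eq mult.commute)
    qed
    ultimately show ?thesis by simp
  qed
  have kn: "n \<le> ?k"
  proof -
    have "real n / 2 \<le> of_int \<lceil>real n / 2\<rceil>" by (rule le_of_int_ceiling)
    hence "real n \<le> 2 * real (nat \<lceil>real n / 2\<rceil>)" by linarith
    thus ?thesis by linarith
  qed
  have pk: "?x^n \<le> ?x^?k" using x2 kn by (intro power_increasing) auto
  have xn: "?x^n > 0" using x2 by simp
  have "real (commuting_count p n) / ?x ^ (6 * n) - sigma_main p * (1 - 1 / ?x ^ ?k)
        = s / ?x^?k - t / ?x^n"
    unfolding ratio_eq[OF p] sig s_def[symmetric] t_def by (simp add: algebra_simps)
  also have "\<bar>\<dots>\<bar> \<le> s / ?x^?k + t / ?x^n"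
  proof -
    have "0 \<le> s / ?x^?k" "0 \<le> t / ?x^n" using s0 x2 by auto
    thus ?thesis by (simp add: abs_le_iff)
  qed
  also have "\<dots> \<le> s / ?x^n + t / ?x^n"
    by (intro add_right_mono divide_left_mono) (use s0 pk xn in auto)
  also have "\<dots> = (s + t) / ?x^n" by (simp add: add_divide_distrib)
  also have "\<dots> \<le> 3 / ?x^n" by (intro divide_right_mono) (use st xn in auto)
  also have "\<dots> \<le> 3 * real n ^ 2 * ?x powr (- real n / 2)"
  proof -
    have "?x powr (real n / 2) \<le> ?x powr (real n)" using x2 by (intro powr_mono) auto
    also have "\<dots> = ?x^n" using x2 by (simp add: powr_realpow)
    finally have a: "?x powr (real n / 2) \<le> ?x^n" .
    have b: "?x powr (- real n / 2) = 1 / ?x powr (real n / 2)"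
    proof -
      have "- real n / 2 = - (real n / 2)" by simp
      thus ?thesis by (simp only: powr_minus inverse_eq_divide)
    qed
    have c: "0 < ?x powr (real n / 2)" using x2 by simp
    have "1 / ?x^n \<le> ?x powr (- real n / 2)" unfolding b
      by (intro divide_left_mono) (use a c xn in auto)
    moreover have "1 \<le> real n ^ 2" using n by simp
    moreover have "0 \<le> ?x powr (- real n / 2)" by simp
    ultimately have "1 / ?x^n \<le> real n ^ 2 * ?x powr (- real n / 2)"
    proof -
      assume h1: "1 / ?x^n \<le> ?x powr (- real n / 2)" and h2: "1 \<le> real n ^ 2"
        and h3: "0 \<le> ?x powr (- real n / 2)"
      have "1 * ?x powr (- real n / 2) \<le> real n ^ 2 * ?x powr (- real n / 2)"
        using h2 h3 by (rule mult_right_mono)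
      thus ?thesis using h1 by simp
    qed
    thus ?thesis by simp
  qed
  finally show ?thesis .
qed

lemma limit_main:
  assumes p: "prime (p::nat)"
  shows "(\<lambda>n. real (commuting_count p n) / real p ^ (6 * n)) \<longlonglongrightarrow> sigma_main p"
proof -
  let ?x = "real p"
  have x2: "?x \<ge> 2" using prime_ge_2_nat[OF p] by simp
  have sig: "sigma_main p = (?x^2 + ?x + 1) / ?x^2"
    unfolding sigma_main_def using sigma_eq[OF x2] by simp
  have "(\<lambda>n. (?x^2 + ?x + 1) / ?x^2 - (?x + 1) / ?x^2 / ?x^n) \<longlonglongrightarrow> (?x^2 + ?x + 1) / ?x^2 - 0"
    using x2 by (intro tendsto_diff tendsto_const LIMSEQ_divide_realpow_zero) auto
  thus ?thesis unfolding ratio_eq[OF p] sig by simp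
qed

theorem theorem1p3:
  shows "(\<exists>C::real. \<forall>p n::nat. prime p \<longrightarrow> n \<ge> 1 \<longrightarrow>
            \<bar>real (commuting_count p n) / real p ^ (6 * n)
              - sigma_main p * (1 - 1 / real p ^ (2 * nat \<lceil>real n / 2\<rceil>))\<bar>
            \<le> C * real n ^ 2 * real p powr (- real n / 2))
       \<and> (\<forall>p::nat. prime p \<longrightarrow>
            (\<lambda>n. real (commuting_count p n) / real p ^ (6 * n)) \<longlonglongrightarrow> sigma_main p)"
proof (intro conjI exI[of _ 3] allI impI)
  fix p n :: nat assume "prime p" "n \<ge> 1"
  thus "\<bar>real (commuting_count p n) / real p ^ (6 * n)
              - sigma_main p * (1 - 1 / real p ^ (2 * nat \<lceil>real n / 2\<rceil>))\<bar>
            \<le> 3 * real n ^ 2 * real p powr (- real n / 2)" by (rule bound_main)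
next
  fix p :: nat assume "prime p"
  thus "(\<lambda>n. real (commuting_count p n) / real p ^ (6 * n)) \<longlonglongrightarrow> sigma_main p"
    by (rule limit_main)
qed

end
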